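(* For any $x, y \in [0,1]$ and $\Delta_x, \Delta_y \in \mathbb{R}$, there exists a $1$-Lipschitz function $f : [0,1] \to [-1,1]$ such that $$f(x)\Delta_x + f(y)\Delta_y = \begin{cases} |\Delta_x| + |\Delta_y|, & \Delta_x\Delta_y \ge 0,\\ |\Delta_x + \Delta_y| + |x-y|\cdot\min\{|\Delta_x|, |\Delta_y|\}, & \Delta_x\Delta_y < 0.\end{cases}$$ *)

theory Defs
  imports "HOL-Analysis.Analysis"
begin

end

theory Submission
  imports Defs
begin

lemma tent:
  fixes s c :: real
  assumes "\<bar>s\<bar> = 1" "c \<in> {0..1}"
  shows "1-lipschitz_on {0..1} (\<lambda>t. s * (1 - \<bar>t - c\<bar>)) \<and>
         (\<lambda>t. s * (1 - \<bar>t - c\<bar>)) ` {0..1} \<subseteq> {-1..1}"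
proof
  show "1-lipschitz_on {0..1} (\<lambda>t. s * (1 - \<bar>t - c\<bar>))"
  proof (rule lipschitz_onI)
    fix a b :: real
    have "\<bar>s * (1 - \<bar>a - c\<bar>) - s * (1 - \<bar>b - c\<bar>)\<bar> = \<bar>\<bar>b - c\<bar> - \<bar>a - c\<bar>\<bar>"
      using assms(1) by (simp add: right_diff_distrib[symmetric] abs_mult)
    also have "\<dots> \<le> \<bar>a - b\<bar>" by linarith
    finally show "dist (s * (1 - \<bar>a - c\<bar>)) (s * (1 - \<bar>b - c\<bar>)) \<le> 1 * dist a b"
      by (simp add: dist_real_def)
  qed simp
  show "(\<lambda>t. s * (1 - \<bar>t - c\<bar>)) ` {0..1} \<subseteq> {-1..1}"
  proof
    fix v assume "v \<in> (\<lambda>t. s * (1 - \<bar>t - c\<bar>)) ` {0..1}"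
    then obtain t where t: "t \<in> {0..1}" "v = s * (1 - \<bar>t - c\<bar>)" by auto
    have "\<bar>v\<bar> \<le> 1" using t assms by (auto simp: abs_mult)
    then show "v \<in> {-1..1}" by auto
  qed
qed

theorem lemma15:
  fixes x y dx dy :: real
  assumes "x \<in> {0..1}" and "y \<in> {0..1}"
  shows "\<exists>f :: real \<Rightarrow> real.
           1-lipschitz_on {0..1} f \<and> f ` {0..1} \<subseteq> {-1..1} \<and>
           f x * dx + f y * dy =
             (if dx * dy \<ge> 0 then \<bar>dx\<bar> + \<bar>dy\<bar>
              else \<bar>dx + dy\<bar> + \<bar>x - y\<bar> * min \<bar>dx\<bar> \<bar>dy\<bar>)"
proof (cases "dx * dy \<ge> 0")
  case True
  define s :: real where "s = (if dx + dy \<ge> 0 then 1 else -1)"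
  have L: "1-lipschitz_on {0..1} (\<lambda>t::real. s)"
    by (rule lipschitz_onI) auto
  have R: "(\<lambda>t::real. s) ` {0..1} \<subseteq> {-1..1}" by (auto simp: s_def)
  have "s * dx + s * dy = \<bar>dx\<bar> + \<bar>dy\<bar>"
    using True by (auto simp: s_def zero_le_mult_iff)
  then show ?thesis using L R True by (intro exI[of _ "\<lambda>t. s"]) auto
next
  case False
  show ?thesis
  proof (cases "\<bar>dx\<bar> \<le> \<bar>dy\<bar>")
    case True
    define s :: real where "s = sgn dy"
    have s1: "\<bar>s\<bar> = 1" using False by (auto simp: s_def sgn_if)
    have "s * (1 - \<bar>x - y\<bar>) * dx + s * (1 - \<bar>y - y\<bar>) * dy
          = \<bar>dx + dy\<bar> + \<bar>x - y\<bar> * min \<bar>dx\<bar> \<bar>dy\<bar>"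
      using False True by (cases "dy > 0"; cases "dx > 0")
        (auto simp: s_def min_def algebra_simps zero_le_mult_iff not_le)
    then show ?thesis using tent[OF s1 assms(2)] False
      by (intro exI[of _ "\<lambda>t. s * (1 - \<bar>t - y\<bar>)"]) auto
  next
    case True2: False
    define s :: real where "s = sgn dx"
    have s1: "\<bar>s\<bar> = 1" using False by (auto simp: s_def sgn_if)
    have "s * (1 - \<bar>x - x\<bar>) * dx + s * (1 - \<bar>y - x\<bar>) * dy
          = \<bar>dx + dy\<bar> + \<bar>x - y\<bar> * min \<bar>dx\<bar> \<bar>dy\<bar>"
      using False True2 by (cases "dy > 0"; cases "dx > 0")
        (auto simp: s_def min_def algebra_simps zero_le_mult_iff not_le abs_minus_commute)
    then show ?thesis using tent[OF s1 assms(1)] False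
      by (intro exI[of _ "\<lambda>t. s * (1 - \<bar>t - x\<bar>)"]) auto
  qed
qed

end
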